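(* There is a function $g(n)=O(\ln\ln n)$ such that for every positive integer $r$ and every feasible instance $(S,\mathcal T)$ of test set with redundancy $r$ with $|S|=n$, every $r$-test set $\mathcal T'$ returned by the set cover greedy algorithm SGA (with any tie-breaking) satisfies $$|\mathcal T'|\le \Big(\big(2-\tfrac{1}{2r}\big)\ln n+\tfrac{3}{2}\ln r+g(n)\Big)\, m^*,$$ where $m^*$ is the minimum cardinality of an $r$-test set of $S$ contained in $\mathcal T$. That is, the approximation ratio of SGA for test set with redundancy $r$ can be $(2-\frac{1}{2r})\ln n+\frac{3}{2}\ln r+O(\ln\ln n)$.
   Context: Test set with redundancy $r\in\mathbb Z^+$: the input is a finite set of items $S$ with $|S|=n$ and a collection $\mathcal T$ of subsets of $S$ (called tests); it is assumed that there are no two tests $T_1,T_2\in\mathcal T$ with $T_1=S-T_2$. An item pair is a set $\{i,j\}$ of two different items of $S$. A test $T$ differentiates an item pair $a$ (written $a\perp T$) if $|T\cap a|=1$; for a family $\mathcal F$ of tests, $\perp(a,\mathcal F)$ denotes the number of tests in $\mathcal F$ that differentiate $a$. A family $\mathcal T'\subseteq\mathcal T$ is an $r$-test set of $S$ if every item pair is differentiated by at least $r$ different tests of $\mathcal T'$; the goal is to find an $r$-test set of minimum cardinality (the instance is feasible if some $r$-test set exists). For a family $\bar{\mathcal T}\subseteq\mathcal T$ (a partial $r$-test set) define the differentiation measure $\#(\bar{\mathcal T})=\sum_a\max(r-\perp(a,\bar{\mathcal T}),0)$, the sum over all item pairs $a$. The set cover greedy algorithm SGA: start with $\bar{\mathcal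 T}=\varnothing$; while $\#(\bar{\mathcal T})>0$, select a test $T\in\mathcal T-\bar{\mathcal T}$ minimizing $\#(\bar{\mathcal T}\cup\{T\})$ and set $\bar{\mathcal T}\leftarrow\bar{\mathcal T}\cup\{T\}$; return $\bar{\mathcal T}$. *)

theory Defs
  imports Complex_Main "HOL-Library.Landau_Symbols"
begin

definition item_pairs :: "'a set \<Rightarrow> 'a set set" where
  "item_pairs S = {a. a \<subseteq> S \<and> card a = 2}"

definition differentiates :: "'a set \<Rightarrow> 'a set \<Rightarrow> bool" where
  "differentiates a T \<longleftrightarrow> card (T \<inter> a) = 1"

definition num_diff :: "'a set \<Rightarrow> 'a set set \<Rightarrow> nat" where
  "num_diff a F = card {T \<in> F. differentiates a T}"

definition valid_instance :: "'a set \<Rightarrow> 'a set set \<Rightarrow> bool" where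
  "valid_instance S TT \<longleftrightarrow> finite S \<and> TT \<subseteq> Pow S \<and>
     \<not> (\<exists>T1\<in>TT. \<exists>T2\<in>TT. T1 = S - T2)"

definition is_r_test_set :: "'a set \<Rightarrow> 'a set set \<Rightarrow> nat \<Rightarrow> 'a set set \<Rightarrow> bool" where
  "is_r_test_set S TT r F \<longleftrightarrow> F \<subseteq> TT \<and> (\<forall>a\<in>item_pairs S. num_diff a F \<ge> r)"

definition feasible :: "'a set \<Rightarrow> 'a set set \<Rightarrow> nat \<Rightarrow> bool" where
  "feasible S TT r \<longleftrightarrow> (\<exists>F. is_r_test_set S TT r F)"

definition opt_size :: "'a set \<Rightarrow> 'a set set \<Rightarrow> nat \<Rightarrow> nat" where
  "opt_size S TT r = (LEAST k. \<exists>F. is_r_test_set S TT r F \<and> card F = k)"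

text \<open>Differentiation measure; nat subtraction gives max(r - perp, 0).\<close>
definition diff_measure :: "'a set \<Rightarrow> nat \<Rightarrow> 'a set set \<Rightarrow> nat" where
  "diff_measure S r F = (\<Sum>a\<in>item_pairs S. r - num_diff a F)"

text \<open>Partial families reachable by SGA with some tie-breaking.\<close>
inductive sga_reach :: "'a set \<Rightarrow> 'a set set \<Rightarrow> nat \<Rightarrow> 'a set set \<Rightarrow> bool"
  for S TT r where
  start: "sga_reach S TT r {}"
| step: "\<lbrakk> sga_reach S TT r F; diff_measure S r F > 0; T \<in> TT - F;
           \<forall>T'\<in>TT - F. diff_measure S r (insert T F) \<le> diff_measure S r (insert T' F) \<rbrakk>
         \<Longrightarrow> sga_reach S TT r (insert T F)"

definition sga_output :: "'a set \<Rightarrow> 'a set set \<Rightarrow> nat \<Rightarrow> 'a set set \<Rightarrow> bool" where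
  "sga_output S TT r F \<longleftrightarrow> sga_reach S TT r F \<and> diff_measure S r F = 0"

end

theory Submission
  imports Defs
begin

definition Phi1 :: "real \<Rightarrow> real \<Rightarrow> real" where
  "Phi1 m x = (if x < m then x else m * (1 + ln (x / m)))"

definition Phi :: "real \<Rightarrow> real \<Rightarrow> real \<Rightarrow> real \<Rightarrow> real" where
  "Phi m B a x = (if x \<le> B then Phi1 m x else Phi1 m B + 1 + (m / a) * ln (x / B))"

lemma Phi1_mono:
  assumes "0 < m" "x \<le> y"
  shows "Phi1 m x \<le> Phi1 m y"
proof -
  have A: "m \<le> m * (1 + ln (z / m))" if "m \<le> z" for z
  proof -
    have "z / m \<ge> 1" using that assms by simp
    hence "ln (z/m) \<ge> 0" by simp
    thus ?thesis using assms by simp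
  qed
  show ?thesis
  proof (cases "y < m")
    case True thus ?thesis using assms by (simp add: Phi1_def)
  next
    case False
    show ?thesis
    proof (cases "x < m")
      case True thus ?thesis using False A[of y] by (simp add: Phi1_def)
    next
      case F2: False
      have "x / m \<le> y / m" using assms by (simp add: divide_right_mono)
      moreover have "0 < x / m" using F2 assms by simp
      ultimately have "ln (x/m) \<le> ln (y/m)" by simp
      thus ?thesis using F2 False assms by (simp add: Phi1_def)
    qed
  qed
qed

lemma ln_ratio_step:
  fixes x y c :: real
  assumes "0 < y" "y < x" "0 < c" "c * (x - y) \<ge> x"
  shows "c * ln (x / y) \<ge> 1"
proof -
  have "ln (y / x) \<le> y / x - 1" using assms by (intro ln_le_minus_one) simp
  moreover have "ln (x / y) = - ln (y / x)" using assms by (simp add: ln_div)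
  ultimately have "ln (x / y) \<ge> (x - y) / x" using assms by (simp add: field_simps)
  hence "c * ln (x / y) \<ge> c * ((x - y) / x)" using assms(3) by (intro mult_left_mono) auto
  moreover have "c * ((x - y) / x) \<ge> 1" using assms by (simp add: field_simps)
  ultimately show ?thesis by linarith
qed

lemma Phi1_step:
  fixes m D D' :: nat
  assumes "1 \<le> m" "D' < D" "real m * (real D - real D') \<ge> real D"
  shows "Phi1 m D' + 1 \<le> Phi1 m D"
proof (cases "D < m")
  case True thus ?thesis using assms by (simp add: Phi1_def)
next
  case False
  have A: "m \<le> m * (1 + ln (real D / m))"
  proof -
    have "real D / m \<ge> 1" using False assms by simp
    hence "ln (real D/m) \<ge> 0" by simp
    thus ?thesis using assms by simp
  qed
  show ?thesis
  proof (cases "D' < m")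
    case True
    hence h: "real D' + 1 \<le> m" by linarith
    have "Phi1 m D' = D'" using True by (simp add: Phi1_def)
    moreover have "Phi1 m D = m * (1 + ln (real D / m))" using False by (simp add: Phi1_def)
    ultimately show ?thesis using A h by linarith
  next
    case F2: False
    have "real m * ln (real D / real D') \<ge> 1"
      using assms F2 by (intro ln_ratio_step) auto
    moreover have "ln (real D / m) = ln (real D / real D') + ln (real D' / m)"
      using assms F2 False by (simp add: ln_div)
    ultimately show ?thesis using F2 False by (simp add: Phi1_def algebra_simps)
  qed
qed

lemma Phi_step:
  fixes m D D' :: nat and B a :: real
  assumes "1 \<le> m" "m \<le> B" "0 < a" "D' < D" "real m * (real D - real D') \<ge> real D"
    "real D > B \<Longrightarrow> real m * (real D - real D') \<ge> a * real D"
  shows "Phi m B a D' + 1 \<le> Phi m B a D"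
proof (cases "real D \<le> B")
  case True
  hence "real D' \<le> B" using assms by linarith
  thus ?thesis using True Phi1_step[OF assms(1,4,5)] by (simp add: Phi_def)
next
  case False
  have Bpos: "B > 0" using assms by linarith
  have lnB: "ln (real D / B) \<ge> 0" using False Bpos by simp
  show ?thesis
  proof (cases "real D' \<le> B")
    case True
    have "Phi1 m D' \<le> Phi1 m B" using True assms by (intro Phi1_mono) auto
    moreover have "(m / a) * ln (real D / B) \<ge> 0" using lnB assms by simp
    ultimately show ?thesis using True False by (simp add: Phi_def)
  next
    case F2: False
    have c: "(m / a) * (real D - real D') \<ge> real D"
      using assms(6)[OF _] False assms(3) by (simp add: field_simps)
    have "(m / a) * ln (real D / real D') \<ge> 1"
      using assms F2 Bpos c by (intro ln_ratio_step) auto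
    moreover have "ln (real D / B) = ln (real D / real D') + ln (real D' / B)"
      using assms F2 False Bpos by (simp add: ln_div)
    ultimately show ?thesis using F2 False by (simp add: Phi_def algebra_simps)
  qed
qed

lemma differentiates_pair:
  assumes "u \<noteq> v"
  shows "differentiates {u, v} T \<longleftrightarrow> ((u \<in> T) \<noteq> (v \<in> T))"
proof -
  have "T \<inter> {u, v} = (if u \<in> T then {u} else {}) \<union> (if v \<in> T then {v} else {})" by auto
  thus ?thesis using assms unfolding differentiates_def by (auto split: if_splits)
qed

lemma pair_min:
  assumes "a \<in> item_pairs S"
  shows "\<exists>y. a = {Min a, y} \<and> y \<noteq> Min a \<and> y \<in> S \<and> Min a \<in> S"
proof -
  from assms obtain u v where uv: "a = {u, v}" "u \<noteq> v" and sub: "a \<subseteq> S"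
    unfolding item_pairs_def by (auto simp: card_2_iff)
  have "Min a \<in> a" using uv by (intro Min_in) auto
  hence "Min a = u \<or> Min a = v" using uv by auto
  thus ?thesis using uv sub by auto
qed

lemma finite_pairs: "finite S \<Longrightarrow> finite (item_pairs S)"
  unfolding item_pairs_def by (rule finite_subset[of _ "Pow S"]) auto

lemma nd_insert:
  assumes "finite F" "T \<notin> F"
  shows "num_diff a (insert T F) = num_diff a F + (if differentiates a T then 1 else 0)"
proof (cases "differentiates a T")
  case True
  hence "{T' \<in> insert T F. differentiates a T'} = insert T {T' \<in> F. differentiates a T'}" by auto
  thus ?thesis using assms True unfolding num_diff_def by simp
next
  case False
  hence "{T' \<in> insert T F. differentiates a T'} = {T' \<in> F. differentiates a T'}" by auto
  thus ?thesis using False unfolding num_diff_def by simp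
qed

lemma reach_sub: "sga_reach S TT r F \<Longrightarrow> F \<subseteq> TT"
  by (induction rule: sga_reach.induct) auto

definition gain :: "'a set \<Rightarrow> nat \<Rightarrow> 'a set set \<Rightarrow> 'a set \<Rightarrow> nat" where
  "gain S r F T = (\<Sum>a\<in>item_pairs S. if differentiates a T \<and> num_diff a F < r then 1 else 0)"

lemma D_insert:
  assumes "finite F" "T \<notin> F"
  shows "diff_measure S r F = diff_measure S r (insert T F) + gain S r F T"
proof -
  have "\<And>a. r - num_diff a F = (r - num_diff a (insert T F))
          + (if differentiates a T \<and> num_diff a F < r then 1 else 0)"
    using nd_insert[OF assms] by auto
  thus ?thesis unfolding diff_measure_def gain_def by (simp add: sum.distrib)
qed

lemma count_sum: "finite A \<Longrightarrow> (\<Sum>x\<in>A. if P x then 1 else 0) = card {x\<in>A. P x}"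
  by (simp add: sum.inter_filter[symmetric])

lemma card_split_le:
  assumes "finite Q" "finite F"
  shows "num_diff a Q - num_diff a F \<le> card {T' \<in> Q - F. differentiates a T'}"
proof -
  have "{T\<in>Q. differentiates a T} \<subseteq> {T' \<in> Q - F. differentiates a T'} \<union> {T\<in>F \<inter> Q. differentiates a T}"
    by auto
  hence "num_diff a Q \<le> card ({T' \<in> Q - F. differentiates a T'} \<union> {T\<in>F \<inter> Q. differentiates a T})"
    unfolding num_diff_def using assms by (intro card_mono) auto
  also have "\<dots> \<le> card {T' \<in> Q - F. differentiates a T'} + card {T\<in>F \<inter> Q. differentiates a T}"
    by (rule card_Un_le)
  also have "card {T\<in>F \<inter> Q. differentiates a T} \<le> card {T\<in>F. differentiates a T}"
    using assms by (intro card_mono) auto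
  finally show ?thesis unfolding num_diff_def by linarith
qed

definition Wsum :: "'a set \<Rightarrow> nat \<Rightarrow> 'a set set \<Rightarrow> 'a set set \<Rightarrow> nat" where
  "Wsum S r Q F = (\<Sum>a\<in>item_pairs S. if num_diff a F < r then num_diff a Q - num_diff a F else 0)"

lemma averaging:
  assumes S: "finite S" and TT: "finite TT" and F: "F \<subseteq> TT" and Q: "Q \<subseteq> TT"
    and T: "T \<in> TT - F"
    and greedy: "\<forall>T'\<in>TT - F. diff_measure S r (insert T F) \<le> diff_measure S r (insert T' F)"
  shows "Wsum S r Q F \<le> card Q * gain S r F T"
proof -
  have finF: "finite F" using F TT finite_subset by blast
  have finQ: "finite Q" using Q TT finite_subset by blast
  have ge: "gain S r F T' \<le> gain S r F T" if "T' \<in> Q - F" for T'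
  proof -
    have "T' \<in> TT - F" using that Q by auto
    hence "diff_measure S r (insert T F) \<le> diff_measure S r (insert T' F)" using greedy by auto
    moreover have "diff_measure S r F = diff_measure S r (insert T F) + gain S r F T"
      using D_insert[OF finF] T by auto
    moreover have "diff_measure S r F = diff_measure S r (insert T' F) + gain S r F T'"
      using D_insert[OF finF] that by auto
    ultimately show ?thesis by linarith
  qed
  have inner: "(\<Sum>T'\<in>Q - F. if differentiates a T' \<and> num_diff a F < r then 1 else 0)
      = (if num_diff a F < r then card {T' \<in> Q - F. differentiates a T'} else 0)" for a
  proof (cases "num_diff a F < r")
    case True thus ?thesis using finQ by (simp add: count_sum)
  next
    case False thus ?thesis by simp
  qed
  have "Wsum S r Q F \<le> (\<Sum>a\<in>item_pairs S. if num_diff a F < r then card {T' \<in> Q - F. differentiates a T'} else 0)"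
    unfolding Wsum_def using card_split_le[OF finQ finF] by (intro sum_mono) auto
  also have "\<dots> = (\<Sum>a\<in>item_pairs S. \<Sum>T'\<in>Q - F. if differentiates a T' \<and> num_diff a F < r then 1 else 0)"
    using inner by simp
  also have "\<dots> = (\<Sum>T'\<in>Q - F. gain S r F T')"
    unfolding gain_def by (rule sum.swap)
  also have "\<dots> \<le> (\<Sum>T'\<in>Q - F. gain S r F T)" using ge by (intro sum_mono) auto
  also have "\<dots> = card (Q - F) * gain S r F T" by simp
  also have "\<dots> \<le> card Q * gain S r F T" using finQ by (intro mult_right_mono card_mono) auto
  finally show ?thesis .
qed

lemma W_ge_D:
  assumes "is_r_test_set S TT r Q"
  shows "diff_measure S r F \<le> Wsum S r Q F"
  unfolding diff_measure_def Wsum_def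
proof (rule sum_mono)
  fix a assume "a \<in> item_pairs S"
  hence "num_diff a Q \<ge> r" using assms unfolding is_r_test_set_def by auto
  thus "r - num_diff a F \<le> (if num_diff a F < r then num_diff a Q - num_diff a F else 0)" by auto
qed

lemma W_refined:
  assumes "is_r_test_set S TT r Q" "finite S"
  shows "(r + 1) * diff_measure S r F \<le> r * Wsum S r Q F + r * card {a\<in>item_pairs S. num_diff a Q \<le> r}"
proof -
  have fin: "finite (item_pairs S)" using finite_pairs assms by auto
  have "(r + 1) * diff_measure S r F = (\<Sum>a\<in>item_pairs S. (r + 1) * (r - num_diff a F))"
    unfolding diff_measure_def by (simp add: sum_distrib_left)
  also have "\<dots> \<le> (\<Sum>a\<in>item_pairs S. r * (if num_diff a F < r then num_diff a Q - num_diff a F else 0)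
       + r * (if num_diff a Q \<le> r then 1 else 0))"
  proof (rule sum_mono)
    fix a assume "a \<in> item_pairs S"
    hence h: "num_diff a Q \<ge> r" using assms unfolding is_r_test_set_def by auto
    show "(r + 1) * (r - num_diff a F) \<le> r * (if num_diff a F < r then num_diff a Q - num_diff a F else 0)
       + r * (if num_diff a Q \<le> r then 1 else 0)"
    proof (cases "num_diff a F < r")
      case False thus ?thesis by simp
    next
      case True
      show ?thesis
      proof (cases "num_diff a Q \<le> r")
        case True2: True
        hence "num_diff a Q = r" using h by simp
        thus ?thesis using True by (simp add: algebra_simps)
      next
        case False
        hence "num_diff a Q - num_diff a F \<ge> r - num_diff a F + 1" using True by simp
        hence "r * (num_diff a Q - num_diff a F) \<ge> r * (r - num_diff a F + 1)" by (rule mult_le_mono2)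
        moreover have "r * (r - num_diff a F + 1) \<ge> (r + 1) * (r - num_diff a F)"
          by (simp add: algebra_simps)
        ultimately show ?thesis using True False by simp
      qed
    qed
  qed
  also have "\<dots> = r * Wsum S r Q F + r * card {a\<in>item_pairs S. num_diff a Q \<le> r}"
    unfolding Wsum_def using fin by (simp add: sum.distrib sum_distrib_left[symmetric] count_sum)
  finally show ?thesis .
qed

lemma N_bound:
  fixes S :: "'a::linorder set"
  assumes Q: "is_r_test_set S TT r Q" and r: "r > 0" and S: "finite S" and fQ: "finite Q"
  shows "card {a\<in>item_pairs S. num_diff a Q \<le> r} \<le> card S * card Q ^ r"
proof -
  let ?A = "{a\<in>item_pairs S. num_diff a Q \<le> r}"
  let ?B = "S \<times> {A. A \<subseteq> Q \<and> card A = r}"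
  let ?f = "\<lambda>a. (Min a, {T\<in>Q. differentiates a T})"
  have ndr: "num_diff a Q \<ge> r" if "a \<in> item_pairs S" for a
    using that Q unfolding is_r_test_set_def by auto
  have img: "?f ` ?A \<subseteq> ?B"
  proof
    fix p assume "p \<in> ?f ` ?A"
    then obtain a where a: "a \<in> ?A" "p = ?f a" by auto
    from pair_min[of a S] a obtain y where "Min a \<in> S" by auto
    moreover have "card {T\<in>Q. differentiates a T} = r" using a ndr[of a] unfolding num_diff_def by auto
    ultimately show "p \<in> ?B" using a by auto
  qed
  have inj: "inj_on ?f ?A"
  proof (rule inj_onI)
    fix a b assume a: "a \<in> ?A" and b: "b \<in> ?A" and eq: "?f a = ?f b"
    from pair_min[of a S] a obtain y where y: "a = {Min a, y}" "y \<noteq> Min a" "y \<in> S" "Min a \<in> S" by auto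
    from pair_min[of b S] b obtain y' where y': "b = {Min b, y'}" "y' \<noteq> Min b" "y' \<in> S" by auto
    have mm: "Min a = Min b" using eq by simp
    have seq: "{T\<in>Q. differentiates a T} = {T\<in>Q. differentiates b T}" using eq by simp
    show "a = b"
    proof (rule ccontr)
      assume "a \<noteq> b"
      hence yy: "y \<noteq> y'" using y y' mm by auto
      have cP: "{y, y'} \<in> item_pairs S" using yy y y' unfolding item_pairs_def by auto
      have "\<not> differentiates {y, y'} T" if "T \<in> Q" for T
      proof -
        have "differentiates a T = differentiates b T" using seq that by blast
        hence "((Min a \<in> T) \<noteq> (y \<in> T)) = ((Min a \<in> T) \<noteq> (y' \<in> T))"
          using y y' mm differentiates_pair by metis
        thus ?thesis using differentiates_pair[OF yy] by blast
      qed
      hence "{T\<in>Q. differentiates {y, y'} T} = {}" by auto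
      hence "num_diff {y, y'} Q = 0" unfolding num_diff_def by (metis card.empty)
      thus False using ndr[OF cP] r by simp
    qed
  qed
  have "card ?A \<le> card ?B"
    using card_inj_on_le[OF inj img] S fQ by auto
  also have "card ?B = card S * (card Q choose r)" using fQ by (simp add: card_cartesian_product n_subsets)
  also have "\<dots> \<le> card S * card Q ^ r"
  proof (cases "r \<le> card Q")
    case True thus ?thesis by (simp add: binomial_le_pow)
  next
    case False thus ?thesis by (simp add: binomial_eq_0)
  qed
  finally show ?thesis .
qed

lemma D_empty:
  assumes "finite S"
  shows "diff_measure S r {} = r * (card S choose 2)"
proof -
  have "diff_measure S r {} = r * card (item_pairs S)" unfolding diff_measure_def num_diff_def by simp
  moreover have "card (item_pairs S) = card S choose 2"
    unfolding item_pairs_def using n_subsets[OF assms] by simp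
  ultimately show ?thesis by simp
qed

lemma r_le_m:
  assumes Q: "is_r_test_set S TT r Q" and fQ: "finite Q" and a: "a \<in> item_pairs S"
  shows "r \<le> card Q"
proof -
  have "r \<le> num_diff a Q" using Q a unfolding is_r_test_set_def by auto
  also have "\<dots> \<le> card Q" unfolding num_diff_def using fQ by (intro card_mono) auto
  finally show ?thesis .
qed

lemma reach_potential:
  fixes phi :: "nat \<Rightarrow> real"
  assumes "sga_reach S TT r F" "finite TT"
    and step: "\<And>F T. sga_reach S TT r F \<Longrightarrow> diff_measure S r F > 0 \<Longrightarrow> T \<in> TT - F \<Longrightarrow>
      \<forall>T'\<in>TT - F. diff_measure S r (insert T F) \<le> diff_measure S r (insert T' F) \<Longrightarrow>
      phi (diff_measure S r (insert T F)) + 1 \<le> phi (diff_measure S r F)"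
  shows "real (card F) + phi (diff_measure S r F) \<le> phi (diff_measure S r {})"
  using assms(1)
proof (induction rule: sga_reach.induct)
  case start thus ?case by simp
next
  case (step F T)
  have "finite F" using reach_sub[OF step.hyps(1)] assms(2) finite_subset by blast
  hence "card (insert T F) = card F + 1" using step.hyps(3) by simp
  thus ?case using step.IH step(1-4) assms(3)[of F T] by simp
qed

lemma inv_a_bound:
  fixes r L :: real assumes "r \<ge> 1" "L \<ge> 1"
  shows "1 / (1 + (1 - 1/L)/r) \<le> r/(r+1) + 1/L"
proof -
  have eq: "1 + (1 - 1/L)/r = (r*L + L - 1)/(r*L)" using assms by (simp add: field_simps)
  have "r*L \<ge> 1*1" using assms by (intro mult_mono) auto
  hence p: "r*L + L - 1 > 0" using assms by linarith
  have "1 / (1 + (1 - 1/L)/r) = r*L/(r*L + L - 1)" using eq p assms by simp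
  also have "\<dots> \<le> r/(r+1) + 1/L"
  proof -
    have "r*L * ((r+1)*L) \<le> (r*L + (r+1)) * (r*L + L - 1)"
    proof -
      have "(r*L + (r+1)) * (r*L + L - 1) - r*L * ((r+1)*L) = r*L*L - r*L + (r+1)*(r*L + L - 1) - r*L*L"
        by (simp add: algebra_simps)
      also have "\<dots> = (r+1)*(r*L+L-1) - r*L" by simp
      also have "\<dots> \<ge> 0"
      proof -
        have "(r+1)*(r*L+L-1) \<ge> 1*(r*L+L-1)" using p assms by (intro mult_right_mono) auto
        hence "(r*L+L-1) \<le> (r+1)*(r*L+L-1)" by simp
        thus ?thesis using assms by linarith
      qed
      finally show ?thesis by linarith
    qed
    hence "r*L/(r*L + L - 1) \<le> (r*L + (r+1)) / ((r+1)*L)"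
      using p assms by (simp add: divide_simps)
    also have "\<dots> = r/(r+1) + 1/L" using assms by (simp add: field_simps)
    finally show ?thesis .
  qed
  finally show ?thesis .
qed

lemma ra_bound:
  fixes r L :: real assumes "r \<ge> 1" "L \<ge> 1"
  shows "(r-1)*(1 + (1-1/L)/r) \<le> r"
proof -
  have "(1-1/L) \<le> 1" "1 - 1/L \<ge> 0" using assms by (auto simp: field_simps)
  hence "(r-1)*((1-1/L)/r) \<le> 1" using assms by (simp add: field_simps)
  thus ?thesis by (simp add: algebra_simps)
qed

lemma r_frac: fixes r :: real assumes "r \<ge> 1" shows "r/(r+1) \<le> 1 - 1/(2*r)"
  using assms by (simp add: field_simps)

lemma ln3: "(x::real) > 0 \<Longrightarrow> y > 0 \<Longrightarrow> z > 0 \<Longrightarrow> ln (x*y*z) = ln x + ln y + ln z"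
  by (simp add: ln_mult)

lemma final_real:
  fixes n m :: real and r :: nat
  assumes n3: "n \<ge> 3" and r1: "r \<ge> 1" and mr: "m \<ge> real r"
  shows "Phi m (n * r * ln n * m^r) (1 + (1 - 1/ln n)/r) (r*n*(n-1)/2)
     \<le> ((2 - 1/(2*r)) * ln n + 3/2 * ln r + 4 + ln (ln n)) * m"
proof -
  define R where "R = real r"
  define L where "L = ln n"
  define a where "a = 1 + (1 - 1/L)/R"
  define B where "B = n * R * L * m^r"
  define D0 where "D0 = R*n*(n-1)/2"
  define C where "C = (2 - 1/(2*R)) * ln n + 3/2 * ln R + 4 + ln L"
  define N where "N = ln n" define X where "X = ln ((n-1)/2)"
  define Y where "Y = ln m" define Z where "Z = ln L"
  have R1: "R \<ge> 1" using r1 by (simp add: R_def)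
  have m1: "m \<ge> 1" using mr r1 by linarith
  have "ln 3 \<ge> (1::real)" using exp_le by (subst ln_ge_iff) auto
  moreover have "ln 3 \<le> ln n" using n3 by simp
  ultimately have L1: "L \<ge> 1" unfolding L_def by linarith
  have N0: "N \<ge> 0" using L1 by (simp add: N_def L_def)
  have NL: "N = L" by (simp add: N_def L_def)
  have Z0: "Z \<ge> 0" using L1 by (simp add: Z_def)
  have Y0: "Y \<ge> 0" using m1 by (simp add: Y_def)
  have X0: "X \<ge> 0" using n3 by (simp add: X_def)
  have XN: "X \<le> N" using n3 by (simp add: X_def N_def)
  have lnR0: "ln R \<ge> 0" using R1 by simp
  have C1: "C \<ge> 4 + ln R + Z"
  proof -
    have "1/(2*R) \<le> 1" using R1 by (simp add: field_simps)
    hence "(2 - 1/(2*R)) * ln n \<ge> 0" using N0 unfolding N_def by (intro mult_nonneg_nonneg) auto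
    thus ?thesis unfolding C_def Z_def using lnR0 by linarith
  qed
  have mpow: "m^r \<ge> m" using m1 r1 by (metis power_increasing power_one_right)
  have mrpos: "m^r > 0" using m1 by simp
  have "n * R \<ge> 1 * 1" using n3 R1 by (intro mult_mono) auto
  hence "(n * R) * L \<ge> 1 * 1" using L1 by (intro mult_mono) auto
  hence "(n * R * L) * m^r \<ge> 1 * m" using mpow m1 by (intro mult_mono) auto
  hence Bm: "B \<ge> m" unfolding B_def by simp
  have Bpos: "B > 0" using Bm m1 by linarith
  have lnB: "ln B = N + ln R + Z + R * Y"
    unfolding B_def N_def Z_def Y_def using n3 R1 L1 m1
    by (simp add: ln_mult ln_realpow R_def)
  have lnD0: "ln D0 = ln R + N + X"
  proof -
    have e: "D0 = R * n * ((n-1)/2)" by (simp add: D0_def)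
    show ?thesis unfolding e N_def X_def by (rule ln3) (use n3 R1 in auto)
  qed
  have D0pos: "D0 > 0" using n3 R1 by (simp add: D0_def)
  have goal: "Phi m B a D0 \<le> C * m"
  proof (cases "D0 \<le> B")
    case True
    show ?thesis
    proof (cases "D0 < m")
      case True2: True
      have "Phi m B a D0 = D0" using True True2 by (simp add: Phi_def Phi1_def)
      moreover have "m \<le> C * m" using C1 lnR0 Z0 m1 by simp
      ultimately show ?thesis using True2 by linarith
    next
      case False
      have eq: "Phi m B a D0 = m * (1 + ln (D0 / m))" using True False by (simp add: Phi_def Phi1_def)
      have ldm: "ln (D0/m) = ln R + N + X - Y" using lnD0 D0pos m1 by (simp add: ln_div Y_def)
      have "ln D0 \<le> ln B" using True D0pos by simp
      hence h1: "X \<le> Z + R * Y" using lnD0 lnB by linarith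
      have "R * (X - Y) \<le> (R - 1) * N + R * Z"
      proof -
        have "(R-1) * X \<le> (R-1) * N" using XN R1 by (intro mult_left_mono) auto
        moreover have "Z \<le> R * Z" using Z0 R1 by (simp add: mult_le_cancel_right1)
        ultimately show ?thesis using h1 by (simp add: algebra_simps)
      qed
      hence "X - Y \<le> ((R - 1) * N + R * Z) / R" using R1 by (simp add: field_simps)
      also have "\<dots> = (1 - 1/R) * N + Z" using R1 by (simp add: field_simps)
      finally have h2: "X - Y \<le> (1 - 1/R) * N + Z" .
      have "(2 - 1/R) * N \<le> (2 - 1/(2*R)) * N" using N0 R1 by (intro mult_right_mono) (auto simp: field_simps)
      hence "1 + ln (D0/m) \<le> C" using h2 ldm lnR0 unfolding C_def N_def Z_def
        by (simp add: algebra_simps)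
      hence "m * (1 + ln (D0/m)) \<le> m * C" using m1 by (intro mult_left_mono) auto
      thus ?thesis using eq by (simp add: mult.commute)
    qed
  next
    case False
    have "1/L \<le> 1" using L1 by simp
    hence "(1 - 1/L)/R \<ge> 0" using R1 by (intro divide_nonneg_nonneg) auto
    hence apos: "a > 0" unfolding a_def by linarith
    have eq: "Phi m B a D0 = m * (1 + ln (B / m)) + 1 + (m / a) * ln (D0 / B)"
      using False Bm by (simp add: Phi_def Phi1_def)
    have lbm: "ln (B/m) = N + ln R + Z + R * Y - Y" using lnB Bpos m1 by (simp add: ln_div Y_def)
    have ldb: "ln (D0/B) = X - Z - R * Y" using lnB lnD0 Bpos D0pos by (simp add: ln_div)
    have ldbpos: "ln (D0/B) > 0" using False Bpos by simp
    have ia: "1/a \<le> R/(R+1) + 1/L" unfolding a_def by (rule inv_a_bound[OF R1 L1])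
    have raa: "(R-1)*a \<le> R" unfolding a_def by (rule ra_bound[OF R1 L1])
    have t1: "ln (D0/B) / a \<le> (N - R*Y) / a" using ldb XN Z0 apos by (simp add: divide_right_mono)
    have t2: "N / a \<le> N * (R/(R+1)) + 1"
    proof -
      have "N / a = N * (1/a)" by simp
      also have "\<dots> \<le> N * (R/(R+1) + 1/L)" using ia N0 by (intro mult_left_mono) auto
      also have "\<dots> = N * (R/(R+1)) + 1" using NL L1 by (simp add: field_simps)
      finally show ?thesis .
    qed
    have t3: "(R-1) * Y \<le> R * Y / a"
    proof -
      have "(R-1) \<le> R / a" using raa apos by (simp add: field_simps)
      hence "(R-1) * Y \<le> (R / a) * Y" using Y0 by (intro mult_right_mono) auto
      thus ?thesis by simp
    qed
    have t4: "N * (R/(R+1)) \<le> N * (1 - 1/(2*R))" using r_frac[OF R1] N0 by (intro mult_left_mono) auto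
    have "ln (D0/B) / a \<le> N * (1 - 1/(2*R)) + 1 - (R-1) * Y"
      using t1 t2 t3 t4 by (simp add: diff_divide_distrib)
    moreover have "N*(1-1/(2*R)) = N - N/(2*R)" "(2-1/(2*R))*ln n = 2*N - N/(2*R)" "(R-1)*Y = R*Y - Y"
      by (auto simp: N_def algebra_simps)
    ultimately have "1 + ln (B / m) + ln (D0/B) / a + 1 \<le> C"
      using lbm lnR0 unfolding C_def Z_def by linarith
    hence "m * (1 + ln (B / m) + ln (D0/B) / a + 1) \<le> m * C" using m1 by (intro mult_left_mono) auto
    moreover have "1 \<le> m * 1" using m1 by simp
    ultimately show ?thesis using eq by (simp add: algebra_simps)
  qed
  thus ?thesis unfolding C_def B_def a_def D0_def R_def L_def by simp
qed

lemma choose2_real: "real (n choose 2) = real n * (real n - 1) / 2"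
proof (cases n)
  case 0 thus ?thesis by simp
next
  case (Suc k)
  have "n choose 2 = n * (n - 1) div 2" by (rule choose_two)
  moreover have "even (n * (n - 1))" by (cases "even n") auto
  ultimately have "2 * (n choose 2) = n * (n - 1)" by simp
  hence "2 * real (n choose 2) = real n * real (n - 1)" by (metis of_nat_mult of_nat_numeral)
  thus ?thesis using Suc by (simp add: of_nat_diff)
qed

lemma step_facts:
  fixes S :: "nat set"
  assumes r: "r > 0" and S: "finite S" and TT: "finite TT"
    and Q: "is_r_test_set S TT r Q"
    and R: "sga_reach S TT r F" and Dpos: "diff_measure S r F > 0" and T: "T \<in> TT - F"
    and greedy: "\<forall>T'\<in>TT - F. diff_measure S r (insert T F) \<le> diff_measure S r (insert T' F)"
  shows "diff_measure S r (insert T F) < diff_measure S r F"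
    "real (card Q) * (real (diff_measure S r F) - real (diff_measure S r (insert T F))) \<ge> real (diff_measure S r F)"
    "real (r+1) * real (diff_measure S r F) \<le> real r * (real (card Q) * (real (diff_measure S r F) - real (diff_measure S r (insert T F))))
        + real r * (real (card S) * real (card Q) ^ r)"
proof -
  have FT: "F \<subseteq> TT" by (rule reach_sub[OF R])
  have finF: "finite F" using FT TT finite_subset by blast
  have QT: "Q \<subseteq> TT" using Q unfolding is_r_test_set_def by auto
  have finQ: "finite Q" using QT TT finite_subset by blast
  define D where "D = diff_measure S r F"
  define D' where "D' = diff_measure S r (insert T F)"
  define G where "G = gain S r F T"
  have deq: "D = D' + G" unfolding D_def D'_def G_def using D_insert[OF finF] T by auto
  have avg: "Wsum S r Q F \<le> card Q * G" unfolding G_def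
    using averaging[OF S TT FT QT T greedy] .
  have WD: "D \<le> Wsum S r Q F" unfolding D_def by (rule W_ge_D[OF Q])
  have Wr: "(r + 1) * D \<le> r * Wsum S r Q F + r * card {a\<in>item_pairs S. num_diff a Q \<le> r}"
    unfolding D_def by (rule W_refined[OF Q S])
  have Nb: "card {a\<in>item_pairs S. num_diff a Q \<le> r} \<le> card S * card Q ^ r"
    by (rule N_bound[OF Q r S finQ])
  have Gr: "real D - real D' = real G" using deq by simp
  have "D \<le> card Q * G" using WD avg by linarith
  hence mg: "real D \<le> real (card Q) * real G" by (metis of_nat_le_iff of_nat_mult)
  have "0 < D" using Dpos D_def by simp
  hence "G > 0" using \<open>D \<le> card Q * G\<close> by (cases G) auto
  thus "diff_measure S r (insert T F) < diff_measure S r F" using deq D_def D'_def by simp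
  show "real (card Q) * (real (diff_measure S r F) - real (diff_measure S r (insert T F))) \<ge> real (diff_measure S r F)"
    using mg Gr D_def D'_def by simp
  have "(r + 1) * D \<le> r * (card Q * G) + r * (card S * card Q ^ r)"
  proof -
    have "r * Wsum S r Q F \<le> r * (card Q * G)" using avg by simp
    moreover have "r * card {a\<in>item_pairs S. num_diff a Q \<le> r} \<le> r * (card S * card Q ^ r)" using Nb by simp
    ultimately show ?thesis using Wr by linarith
  qed
  hence "real ((r + 1) * D) \<le> real (r * (card Q * G) + r * (card S * card Q ^ r))" by (simp only: of_nat_le_iff)
  thus "real (r+1) * real (diff_measure S r F) \<le> real r * (real (card Q) * (real (diff_measure S r F) - real (diff_measure S r (insert T F))))
        + real r * (real (card S) * real (card Q) ^ r)"
    using Gr D_def D'_def by (simp add: algebra_simps)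
qed

lemma opt_exists:
  assumes "feasible S TT r"
  shows "\<exists>Q. is_r_test_set S TT r Q \<and> card Q = opt_size S TT r"
proof -
  from assms obtain F0 where "is_r_test_set S TT r F0" unfolding feasible_def by auto
  hence "\<exists>k F. is_r_test_set S TT r F \<and> card F = k" by auto
  from LeastI_ex[OF this] show ?thesis unfolding opt_size_def by auto
qed

lemma reach_no_pairs:
  assumes "item_pairs S = {}" "sga_reach S TT r F"
  shows "F = {}"
  using assms(2)
proof (induction rule: sga_reach.induct)
  case start thus ?case by simp
next
  case (step F T)
  thus ?case using assms(1) unfolding diff_measure_def by simp
qed

lemma ln_ge_1: "(n::real) \<ge> 3 \<Longrightarrow> ln n \<ge> 1"
proof -
  assume n: "n \<ge> 3"
  have "ln 3 \<ge> (1::real)" using exp_le by (subst ln_ge_iff) auto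
  moreover have "ln 3 \<le> ln n" using n by simp
  ultimately show ?thesis by linarith
qed

lemma instance_big:
  fixes S :: "nat set"
  assumes r: "r > 0" and V: "valid_instance S TT" and Fe: "feasible S TT r"
    and Out: "sga_output S TT r F" and n3: "card S \<ge> 3"
  shows "real (card F) \<le> ((2 - 1/(2*real r)) * ln (real (card S)) + 3/2 * ln (real r) + 4
          + ln (ln (real (card S)))) * real (opt_size S TT r)"
proof -
  have S: "finite S" and TTS: "TT \<subseteq> Pow S" using V unfolding valid_instance_def by auto
  have TT: "finite TT" by (rule finite_subset[OF TTS]) (simp add: S)
  obtain Q where Q: "is_r_test_set S TT r Q" and cQ: "card Q = opt_size S TT r"
    using opt_exists[OF Fe] by auto
  have finQ: "finite Q" using Q TT finite_subset unfolding is_r_test_set_def by blast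
  define n where "n = card S"
  define m where "m = card Q"
  have "card S \<ge> 2" using n3 by simp
  hence "S \<noteq> {}" by auto
  then obtain x where x: "x \<in> S" by auto
  have "card (S - {x}) \<ge> 1" using n3 x S by simp
  hence "S - {x} \<noteq> {}" by (metis card.empty not_one_le_zero)
  then obtain y where "y \<in> S - {x}" by auto
  hence xy: "x \<in> S" "y \<in> S" "x \<noteq> y" using x by auto
  have pair: "{x, y} \<in> item_pairs S" using xy unfolding item_pairs_def by auto
  have rm: "r \<le> m" unfolding m_def by (rule r_le_m[OF Q finQ pair])
  have m1: "1 \<le> m" using rm r by simp
  define L where "L = ln (real n)"
  have L1: "L \<ge> 1" unfolding L_def n_def using ln_ge_1 n3 by simp
  define B where "B = real n * real r * L * real m ^ r"
  define a where "a = 1 + (1 - 1/L)/real r"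
  have mpow: "real m ^ r \<ge> real m" using m1 r power_increasing[of 1 r "real m"] by simp
  have "real n * real r \<ge> 1 * 1" using n3 r unfolding n_def by (intro mult_mono) auto
  hence "(real n * real r) * L \<ge> 1 * 1" using L1 by (intro mult_mono) auto
  hence "(real n * real r * L) * real m ^ r \<ge> 1 * real m" using mpow m1 by (intro mult_mono) auto
  hence Bm: "B \<ge> real m" unfolding B_def by simp
  have "1/L \<le> 1" using L1 by simp
  hence "(1 - 1/L)/real r \<ge> 0" using r by (intro divide_nonneg_nonneg) auto
  hence apos: "a > 0" unfolding a_def by linarith
  have stepPhi: "(\<lambda>x. Phi m B a (real x)) (diff_measure S r (insert T F')) + 1
        \<le> (\<lambda>x. Phi m B a (real x)) (diff_measure S r F')"
    if R: "sga_reach S TT r F'" and Dp: "diff_measure S r F' > 0" and T: "T \<in> TT - F'"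
      and gr: "\<forall>T'\<in>TT - F'. diff_measure S r (insert T F') \<le> diff_measure S r (insert T' F')" for F' T
  proof -
    note sf = step_facts[OF r S TT Q R Dp T gr]
    define D where "D = diff_measure S r F'"
    define D' where "D' = diff_measure S r (insert T F')"
    have s1: "D' < D" using sf(1) D_def D'_def by simp
    have s2: "real m * (real D - real D') \<ge> real D" using sf(2) D_def D'_def m_def by simp
    have s3: "real (r+1) * real D \<le> real r * (real m * (real D - real D')) + real r * (real n * real m ^ r)"
      using sf(3) D_def D'_def m_def n_def by simp
    have ref: "real m * (real D - real D') \<ge> a * real D" if DB: "real D > B"
    proof -
      have e1: "real r * (real n * real m ^ r) = B / L" unfolding B_def using L1 by (simp add: field_simps)
      have "B / L \<le> real D / L" using DB L1 by (simp add: divide_right_mono)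
      hence "real (r+1) * real D - real D / L \<le> real r * (real m * (real D - real D'))"
        using s3 e1 by linarith
      moreover have "real r * (a * real D) = real (r+1) * real D - real D / L"
        unfolding a_def using r L1 by (simp add: field_simps)
      ultimately have "real r * (a * real D) \<le> real r * (real m * (real D - real D'))" by linarith
      thus ?thesis using r by simp
    qed
    have "Phi m B a D' + 1 \<le> Phi m B a D"
      by (rule Phi_step[OF m1 Bm apos s1 s2 ref])
    thus ?thesis using D_def D'_def by simp
  qed
  have main: "real (card F) + (\<lambda>x. Phi m B a (real x)) (diff_measure S r F)
      \<le> (\<lambda>x. Phi m B a (real x)) (diff_measure S r {})"
    using Out unfolding sga_output_def
    by (intro reach_potential[OF _ TT]) (auto intro: stepPhi)
  have DF: "diff_measure S r F = 0" using Out unfolding sga_output_def by simp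
  have Phi0: "Phi m B a 0 = 0" using Bm m1 unfolding Phi_def Phi1_def by simp
  have D0: "real (diff_measure S r {}) = real r * real n * (real n - 1) / 2"
    unfolding D_empty[OF S] n_def using choose2_real by simp
  have "real (card F) \<le> Phi m B a (real r * real n * (real n - 1) / 2)"
    using main DF Phi0 D0 by simp
  also have "\<dots> \<le> ((2 - 1/(2*real r)) * ln (real n) + 3/2 * ln (real r) + 4 + ln (ln (real n))) * real m"
    using final_real[of "real n" r "real m"] n3 rm r unfolding B_def a_def L_def n_def by simp
  finally show ?thesis unfolding n_def m_def cQ .
qed

lemma instance_small:
  fixes S :: "nat set"
  assumes r: "r > 0" and V: "valid_instance S TT" and Fe: "feasible S TT r"
    and Out: "sga_output S TT r F" and n2: "card S = 2"
  shows "real (card F) \<le> real (opt_size S TT r)"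
proof -
  have S: "finite S" and TTS: "TT \<subseteq> Pow S" using V unfolding valid_instance_def by auto
  have TT: "finite TT" by (rule finite_subset[OF TTS]) (simp add: S)
  obtain Q where Q: "is_r_test_set S TT r Q" and cQ: "card Q = opt_size S TT r"
    using opt_exists[OF Fe] by auto
  have finQ: "finite Q" using Q TT finite_subset unfolding is_r_test_set_def by blast
  define m where "m = card Q"
  have "S \<in> item_pairs S" using n2 unfolding item_pairs_def by auto
  hence rm: "r \<le> m" unfolding m_def by (rule r_le_m[OF Q finQ])
  have m1: "1 \<le> m" using rm r by simp
  have stepPhi: "(\<lambda>x. Phi1 m (real x)) (diff_measure S r (insert T F')) + 1
        \<le> (\<lambda>x. Phi1 m (real x)) (diff_measure S r F')"
    if R: "sga_reach S TT r F'" and Dp: "diff_measure S r F' > 0" and T: "T \<in> TT - F'"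
      and gr: "\<forall>T'\<in>TT - F'. diff_measure S r (insert T F') \<le> diff_measure S r (insert T' F')" for F' T
  proof -
    note sf = step_facts[OF r S TT Q R Dp T gr]
    have "Phi1 m (diff_measure S r (insert T F')) + 1 \<le> Phi1 m (diff_measure S r F')"
      by (rule Phi1_step[OF m1 sf(1)]) (use sf(2) m_def in simp)
    thus ?thesis by simp
  qed
  have main: "real (card F) + (\<lambda>x. Phi1 m (real x)) (diff_measure S r F)
      \<le> (\<lambda>x. Phi1 m (real x)) (diff_measure S r {})"
    using Out unfolding sga_output_def
    by (intro reach_potential[OF _ TT]) (auto intro: stepPhi)
  have DF: "diff_measure S r F = 0" using Out unfolding sga_output_def by simp
  have Phi0: "Phi1 m 0 = 0" using m1 unfolding Phi1_def by simp
  have D0: "diff_measure S r {} = r" using D_empty[OF S] n2 by simp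
  have "Phi1 m r \<le> m"
  proof (cases "r < m")
    case True thus ?thesis by (simp add: Phi1_def)
  next
    case False hence "r = m" using rm by simp
    thus ?thesis using m1 by (simp add: Phi1_def)
  qed
  thus ?thesis using main DF Phi0 D0 cQ m_def by simp
qed

lemma eventually_lnln: "\<forall>\<^sub>F n in at_top. ln (ln (real (n::nat))) \<ge> 1"
proof -
  have "exp (3::real) = exp 1 ^ 3" by (simp add: exp_of_nat_mult[symmetric])
  also have "\<dots> \<le> 3 ^ 3" using exp_le by (intro power_mono) auto
  finally have e3: "exp (3::real) \<le> 27" by simp
  have "ln (ln (real n)) \<ge> 1" if "n \<ge> 30" for n :: nat
  proof -
    have "exp 3 \<le> real n" using e3 that by linarith
    hence "ln (real n) \<ge> 3" using that by (subst ln_ge_iff) auto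
    moreover have "exp 1 \<le> (3::real)" by (rule exp_le)
    ultimately have "exp 1 \<le> ln (real n)" by linarith
    thus ?thesis using \<open>ln (real n) \<ge> 3\<close> by (subst ln_ge_iff) auto
  qed
  thus ?thesis by (intro eventually_at_top_linorderI[of 30]) auto
qed

theorem theorem1:
  shows "\<exists>g :: nat \<Rightarrow> real. g \<in> O(\<lambda>n. ln (ln (real n))) \<and>
    (\<forall>(r::nat) (S::nat set) TT F. r > 0 \<longrightarrow> valid_instance S TT \<longrightarrow> feasible S TT r \<longrightarrow>
        sga_output S TT r F \<longrightarrow>
        real (card F) \<le> ((2 - 1 / (2 * real r)) * ln (real (card S)) + 3 / 2 * ln (real r)
                           + g (card S)) * real (opt_size S TT r))"
proof (intro exI conjI allI impI)
  define g :: "nat \<Rightarrow> real" where "g = (\<lambda>n. if n < 3 then 4 else 4 + ln (ln (real n)))"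
  show "g \<in> O(\<lambda>n. ln (ln (real n)))"
  proof (rule bigoI[where c = 5])
    show "\<forall>\<^sub>F n in at_top. norm (g n) \<le> 5 * norm (ln (ln (real n)))"
      using eventually_lnln eventually_ge_at_top[of "3::nat"]
      by eventually_elim (auto simp: g_def)
  qed
  fix r :: nat and S :: "nat set" and TT F
  assume r: "r > 0" and V: "valid_instance S TT" and Fe: "feasible S TT r" and Out: "sga_output S TT r F"
  have S: "finite S" using V unfolding valid_instance_def by auto
  have lnr: "ln (real r) \<ge> 0" using r by simp
  have c0: "2 - 1 / (2 * real r) \<ge> 0" using r by (simp add: field_simps)
  have ln0: "ln (real (card S)) \<ge> 0" by (cases "card S") auto
  have cl: "(2 - 1 / (2 * real r)) * ln (real (card S)) \<ge> 0" using c0 ln0 by simp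
  show "real (card F) \<le> ((2 - 1 / (2 * real r)) * ln (real (card S)) + 3 / 2 * ln (real r)
                           + g (card S)) * real (opt_size S TT r)"
  proof (cases "card S \<ge> 3")
    case True
    thus ?thesis using instance_big[OF r V Fe Out True] by (simp add: g_def algebra_simps)
  next
    case False
    hence g4: "g (card S) = 4" by (simp add: g_def)
    have coef: "(2 - 1 / (2 * real r)) * ln (real (card S)) + 3 / 2 * ln (real r) + g (card S) \<ge> 1"
      using cl lnr g4 by linarith
    show ?thesis
    proof (cases "card S = 2")
      case True
      have "real (card F) \<le> 1 * real (opt_size S TT r)" using instance_small[OF r V Fe Out True] by simp
      also have "\<dots> \<le> ((2 - 1 / (2 * real r)) * ln (real (card S)) + 3 / 2 * ln (real r)
                           + g (card S)) * real (opt_size S TT r)" using coef by (intro mult_right_mono) auto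
      finally show ?thesis .
    next
      case F2: False
      hence "card S \<le> 1" using False by simp
      hence "item_pairs S = {}" unfolding item_pairs_def using S
        by (auto dest: card_mono[OF S])
      hence "F = {}" using reach_no_pairs Out unfolding sga_output_def by blast
      thus ?thesis using coef by simp
    qed
  qed
qed

end
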